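(* Let $\mathbf{i}=(i_1,\dots,i_r)$, $\mathbf{j}=(j_1,\dots,j_r)$ be sequences of positive integers with equal sums $N$, and suppose $g=\det M(\mathbf{i};\mathbf{j})$ is nonzero and irreducible. If $r=1$, then $g$ is homogeneous. If $r>1$, then the homogeneous component of $g$ of degree $\deg(g)-1$ is nonzero.
   Context: $M(\mathbf{i};\mathbf{j})$ is the $N\times N$ matrix whose rows are divided into blocks of sizes $i_1,\dots,i_r$ (top to bottom) and columns into blocks of sizes $j_r,\dots,j_1$ (left to right; the block of size $j_t$ is column block $t$). Row block $s$ has an $i_s\times j_s$ matrix $A^s$ of indeterminates in column block $s$; for $s\ge 2$ the matrix $I_{i_s,j_{s-1}}$ in column block $s-1$; zeros in column blocks $t<s-1$; and indeterminates in column blocks $t>s$. $I_{c,d}$ is the $c\times d$ matrix with $1$s on its main diagonal and $0$s elsewhere. All indeterminates are distinct. *)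

theory Defs
  imports "HOL-Library.Poly_Mapping" "HOL-Computational_Algebra.Factorial_Ring"
    "Jordan_Normal_Form.Determinant"
begin

text \<open>Multivariate polynomials over a field 'a in indeterminates indexed by
  matrix positions (row, column) :: nat \<times> nat, represented as finitely
  supported maps from monomials (exponent vectors) to coefficients.\<close>

type_synonym 'a mpoly = "((nat \<times> nat) \<Rightarrow>\<^sub>0 nat) \<Rightarrow>\<^sub>0 'a"

definition Xvar :: "nat \<times> nat \<Rightarrow> 'a::comm_semiring_1 mpoly" where
  "Xvar v = Poly_Mapping.single (Poly_Mapping.single v 1) 1"

definition const_mp :: "'a::comm_semiring_1 \<Rightarrow> 'a mpoly" where
  "const_mp c = Poly_Mapping.single 0 c"

definition mon_deg :: "((nat \<times> nat) \<Rightarrow>\<^sub>0 nat) \<Rightarrow> nat" where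
  "mon_deg m = (\<Sum>v\<in>Poly_Mapping.keys m. Poly_Mapping.lookup m v)"

definition total_deg :: "'a::zero mpoly \<Rightarrow> nat" where
  "total_deg g = Max (insert 0 (mon_deg ` Poly_Mapping.keys g))"

definition hom_component :: "nat \<Rightarrow> 'a::zero mpoly \<Rightarrow> 'a mpoly" where
  "hom_component d g = Abs_poly_mapping (\<lambda>m. if mon_deg m = d then Poly_Mapping.lookup g m else 0)"

definition homogeneous :: "'a::zero mpoly \<Rightarrow> bool" where
  "homogeneous g \<longleftrightarrow> (\<forall>m\<in>Poly_Mapping.keys g. mon_deg m = total_deg g)"

text \<open>Blocks (0-based): position p lies in block b of a list of block sizes
  iff sum of the first b sizes \<le> p < sum of the first b+1 sizes.\<close>
definition block_of :: "nat list \<Rightarrow> nat \<Rightarrow> nat" where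
  "block_of sz p = (LEAST b. p < sum_list (take (Suc b) sz))"

definition block_start :: "nat list \<Rightarrow> nat \<Rightarrow> nat" where
  "block_start sz b = sum_list (take b sz)"

text \<open>Rows are split in blocks of sizes i_1..i_r
  (top to bottom, 0-based row block s0 = s - 1).  Columns are split in
  blocks of sizes j_r,...,j_1 left to right; the u-th block from the left
  (0-based, in the list rev js) is column block t with t0 = t - 1 = r - 1 - u.
  Entry in row block s, column block t: indeterminate if t \<ge> s;
  identity I_{i_s,j_{s-1}} entry if t = s - 1; zero if t < s - 1.
  Indeterminate at position (p,q) is Xvar (p,q), so all are distinct.\<close>
definition M_entry :: "nat list \<Rightarrow> nat list \<Rightarrow> nat \<Rightarrow> nat \<Rightarrow> 'a::comm_semiring_1 mpoly" where
  "M_entry ii jj p q =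
    (let r = length ii;
         s0 = block_of ii p;
         u = block_of (rev jj) q;
         t0 = r - 1 - u;
         lr = p - block_start ii s0;
         lc = q - block_start (rev jj) u
     in if s0 \<le> t0 then Xvar (p, q)
        else if Suc t0 = s0 then (if lr = lc then 1 else 0)
        else 0)"

definition Mmat :: "nat list \<Rightarrow> nat list \<Rightarrow> 'a::comm_semiring_1 mpoly mat" where
  "Mmat ii jj = mat (sum_list ii) (sum_list jj) (\<lambda>(p, q). M_entry ii jj p q)"

end

theory Submission
  imports Defs
begin

lemma sum_take_mono:
  fixes xs :: "nat list"
  assumes "k \<le> k'" shows "sum_list (take k xs) \<le> sum_list (take k' xs)"
proof -
  have "take k' xs = take k xs @ take (k' - k) (drop k xs)"
    using assms by (metis le_add_diff_inverse take_add)
  then show ?thesis by (metis le_add1 sum_list_append)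
qed

lemma block_of_lt:
  assumes "p < sum_list sz" shows "block_of sz p < length sz"
proof -
  have "length sz > 0" using assms by (cases sz) auto
  then have w: "p < sum_list (take (Suc (length sz - 1)) sz)" using assms by simp
  have "block_of sz p \<le> length sz - 1"
    unfolding block_of_def by (rule Least_le[of "\<lambda>b. p < sum_list (take (Suc b) sz)", OF w])
  then show ?thesis using \<open>length sz > 0\<close> by linarith
qed

lemma block_start_le:
  assumes "p < sum_list sz" shows "block_start sz (block_of sz p) \<le> p"
proof (cases "block_of sz p")
  case 0 then show ?thesis by (simp add: block_start_def)
next
  case (Suc b)
  have "b < block_of sz p" using Suc by simp
  then have "\<not> p < sum_list (take (Suc b) sz)"
    unfolding block_of_def by (rule not_less_Least)
  then show ?thesis using Suc by (simp add: block_start_def)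
qed

lemma block_of_eqI:
  assumes "block_start sz b \<le> p" "p < block_start sz (Suc b)"
  shows "block_of sz p = b"
  unfolding block_of_def
proof (rule Least_equality)
  show "p < sum_list (take (Suc b) sz)" using assms by (simp add: block_start_def)
  fix y assume y: "p < sum_list (take (Suc y) sz)"
  show "b \<le> y"
  proof (rule ccontr)
    assume "\<not> b \<le> y"
    then have "sum_list (take (Suc y) sz) \<le> sum_list (take b sz)"
      by (intro sum_take_mono) simp
    then show False using y assms(1) by (simp add: block_start_def)
  qed
qed


lemma prod_singles:
  fixes f :: "'b \<Rightarrow> 'm::comm_monoid_add"
  assumes "finite S"
  shows "(\<Prod>i\<in>S. Poly_Mapping.single (f i) (1::'a::comm_semiring_1)) = Poly_Mapping.single (\<Sum>i\<in>S. f i) 1"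
  using assms by (induction S rule: finite_induct) (auto simp: mult_single add.commute)

lemma mon_deg_alt:
  assumes "finite K" "Poly_Mapping.keys m \<subseteq> K"
  shows "mon_deg m = (\<Sum>v\<in>K. Poly_Mapping.lookup m v)"
  unfolding mon_deg_def
  by (rule sum.mono_neutral_left) (use assms in \<open>auto simp: in_keys_iff\<close>)

lemma mon_deg_add: "mon_deg (a + b) = mon_deg a + mon_deg b"
proof -
  let ?K = "Poly_Mapping.keys a \<union> Poly_Mapping.keys b"
  have "mon_deg (a + b) = (\<Sum>v\<in>?K. Poly_Mapping.lookup (a + b) v)"
    by (rule mon_deg_alt) (auto simp: keys_add)
  also have "\<dots> = (\<Sum>v\<in>?K. Poly_Mapping.lookup a v) + (\<Sum>v\<in>?K. Poly_Mapping.lookup b v)"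
    by (simp add: lookup_add sum.distrib)
  also have "\<dots> = mon_deg a + mon_deg b"
    using mon_deg_alt[of ?K a] mon_deg_alt[of ?K b] by auto
  finally show ?thesis .
qed

lemma mon_deg_zero: "mon_deg 0 = 0" by (simp add: mon_deg_def)

lemma mon_deg_single1: "mon_deg (Poly_Mapping.single v 1) = 1" "mon_deg (Poly_Mapping.single v (Suc 0)) = 1"
  by (simp_all add: mon_deg_def)

lemma mon_deg_sum: "mon_deg (\<Sum>i\<in>S. f i) = (\<Sum>i\<in>S. mon_deg (f i))"
  by (induction S rule: infinite_finite_induct) (auto simp: mon_deg_zero mon_deg_add)

lemma Xvar_single: "Xvar v = Poly_Mapping.single (Poly_Mapping.single v 1) 1"
  by (simp add: Xvar_def)

lemma monomial_sum_zero:
  fixes l q :: "'k \<Rightarrow>\<^sub>0 nat"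
  shows "(l + q = 0) \<longleftrightarrow> (l = 0 \<and> q = 0)"
proof
  assume h: "l + q = 0"
  have "Poly_Mapping.lookup l k = 0 \<and> Poly_Mapping.lookup q k = 0" for k
    using arg_cong[OF h, of "\<lambda>x. Poly_Mapping.lookup x k"] by (simp add: lookup_add)
  then show "l = 0 \<and> q = 0" by (auto intro: poly_mapping_eqI)
qed simp

lemma ct_mult:
  fixes f g :: "('k \<Rightarrow>\<^sub>0 nat) \<Rightarrow>\<^sub>0 'a::comm_semiring_1"
  shows "Poly_Mapping.lookup (f * g) 0 = Poly_Mapping.lookup f 0 * Poly_Mapping.lookup g 0"
proof -
  have inner: "(\<Sum>q. Poly_Mapping.lookup g q when 0 = l + q) = (Poly_Mapping.lookup g 0 when l = 0)" for l :: "'k \<Rightarrow>\<^sub>0 nat"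
  proof (cases "l = 0")
    case True then show ?thesis by simp
  next
    case False
    then have "(\<lambda>q. Poly_Mapping.lookup g q when 0 = l + q) = (\<lambda>q. 0)"
      using monomial_sum_zero[of l] by (auto simp: when_def)
    then have "(\<Sum>q. Poly_Mapping.lookup g q when 0 = l + q) = (\<Sum>q::'k \<Rightarrow>\<^sub>0 nat. (0::'a))"
      by (simp only:)
    then show ?thesis using False by simp
  qed
  have "Poly_Mapping.lookup (f * g) 0 = (\<Sum>l. Poly_Mapping.lookup f l * (Poly_Mapping.lookup g 0 when l = 0))"
    unfolding lookup_mult inner ..
  also have "\<dots> = (\<Sum>l. Poly_Mapping.lookup f l * Poly_Mapping.lookup g 0 when l = 0)"
    by (simp add: mult_when)
  also have "\<dots> = Poly_Mapping.lookup f 0 * Poly_Mapping.lookup g 0" by simp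
  finally show ?thesis .
qed

lemma ct_prod:
  fixes f :: "'b \<Rightarrow> ('k \<Rightarrow>\<^sub>0 nat) \<Rightarrow>\<^sub>0 'a::comm_semiring_1"
  shows "Poly_Mapping.lookup (\<Prod>i\<in>S. f i) 0 = (\<Prod>i\<in>S. Poly_Mapping.lookup (f i) 0)"
  by (induction S rule: infinite_finite_induct) (auto simp: ct_mult lookup_one)

lemma ct_unit:
  fixes f :: "('k \<Rightarrow>\<^sub>0 nat) \<Rightarrow>\<^sub>0 'a::comm_semiring_1"
  assumes "f dvd 1" shows "Poly_Mapping.lookup f 0 \<noteq> 0"
proof
  assume h: "Poly_Mapping.lookup f 0 = 0"
  from assms obtain g where g: "1 = f * g" by (auto elim: dvdE)
  have "Poly_Mapping.lookup (f * g) 0 = Poly_Mapping.lookup f 0 * Poly_Mapping.lookup g 0"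
    by (rule ct_mult)
  then show False using h g[symmetric] by (simp add: lookup_one)
qed

lemma ct_Xvar: "Poly_Mapping.lookup (Xvar v) 0 = 0"
proof -
  have "Poly_Mapping.single v (1::nat) \<noteq> 0"
    by (metis lookup_single_eq lookup_zero one_neq_zero)
  then show ?thesis by (simp add: Xvar_def lookup_single when_def)
qed

lemma ct_of_int_mult:
  fixes f :: "('k \<Rightarrow>\<^sub>0 nat) \<Rightarrow>\<^sub>0 'a::comm_ring_1"
  shows "Poly_Mapping.lookup (of_int k * f) 0 = of_int k * Poly_Mapping.lookup f 0"
  by (simp add: ct_mult flip: single_of_int)

lemma lookup_hom_component:
  "Poly_Mapping.lookup (hom_component d g) m = (if mon_deg m = d then Poly_Mapping.lookup g m else 0)"
proof -
  have "finite {m. (if mon_deg m = d then Poly_Mapping.lookup g m else 0) \<noteq> 0}"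
    by (rule finite_subset[of _ "Poly_Mapping.keys g"]) (auto simp: in_keys_iff)
  then show ?thesis unfolding hom_component_def by simp
qed

locale MM =
  fixes ii jj :: "nat list"
  assumes len: "length ii = length jj"
    and posi: "\<forall>k\<in>set ii. 0 < k" and posj: "\<forall>k\<in>set jj. 0 < k"
    and sums: "sum_list ii = sum_list jj"
begin

abbreviation "N \<equiv> sum_list ii"
abbreviation "r \<equiv> length ii"

definition "s0 p = block_of ii p"
definition "u q = block_of (rev jj) q"
definition "t0 q = r - 1 - u q"
definition "V p q \<longleftrightarrow> s0 p \<le> t0 q"
definition "E p q \<longleftrightarrow> \<not> V p q \<and> Suc (t0 q) = s0 p \<and>
   p - block_start ii (s0 p) = q - block_start (rev jj) (u q)"

lemma entry: "M_entry ii jj p q = (if V p q then Xvar (p,q) else if E p q then 1 else 0)"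
  unfolding M_entry_def V_def E_def s0_def u_def t0_def Let_def by auto

lemma sumrev: "sum_list (rev jj) = N" using sums by simp

lemma s0_lt: "p < N \<Longrightarrow> s0 p < r"
  unfolding s0_def by (rule block_of_lt)

lemma u_lt: "q < N \<Longrightarrow> u q < r"
  unfolding u_def using block_of_lt[of q "rev jj"] sumrev len by simp

lemma row_unique:
  assumes "q1 < N" "q2 < N" "E p q1" "E p q2" shows "q1 = q2"
proof -
  have "t0 q1 = t0 q2" using assms(3,4) unfolding E_def by simp
  then have uu: "u q1 = u q2" using u_lt[OF assms(1)] u_lt[OF assms(2)] unfolding t0_def by simp
  have "q1 - block_start (rev jj) (u q1) = q2 - block_start (rev jj) (u q2)"
    using assms(3,4) unfolding E_def by simp
  moreover have "block_start (rev jj) (u q1) \<le> q1" "block_start (rev jj) (u q2) \<le> q2"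
    unfolding u_def using block_start_le sumrev assms(1,2) by auto
  ultimately show ?thesis using uu by simp
qed

lemma col_unique:
  assumes "q1 < N" "p2 < N" "E q1 q" "E p2 q" shows "q1 = p2"
proof -
  have ss: "s0 q1 = s0 p2" using assms(3,4) unfolding E_def by simp
  have "q1 - block_start ii (s0 q1) = p2 - block_start ii (s0 p2)"
    using assms(3,4) unfolding E_def by simp
  moreover have "block_start ii (s0 q1) \<le> q1" "block_start ii (s0 p2) \<le> p2"
    unfolding s0_def using block_start_le assms(1,2) by auto
  ultimately show ?thesis using ss by simp
qed

lemma swapV: "E a b \<Longrightarrow> V a b' \<Longrightarrow> V a' b \<Longrightarrow> V a' b'"
  unfolding E_def V_def by simp

lemma VE_excl: "E a b \<Longrightarrow> \<not> V a b" unfolding E_def by simp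

lemma s0_zero: "0 < r \<Longrightarrow> s0 0 = 0"
  unfolding s0_def using posi
  by (intro block_of_eqI) (auto simp: block_start_def take_Suc_conv_app_nth)

lemma u_zero: "0 < r \<Longrightarrow> u 0 = 0"
proof -
  assume "0 < r"
  then have "jj \<noteq> []" using len by auto
  then have "last jj > 0" using posj by auto
  then show ?thesis unfolding u_def using \<open>jj \<noteq> []\<close>
    by (intro block_of_eqI) (auto simp: block_start_def take_Suc_conv_app_nth rev_nth last_conv_nth)
qed

lemma c_facts: assumes "1 < r" shows "s0 (ii!0) = 1" "block_start ii 1 = ii!0" "ii!0 < N"
proof -
  obtain x y rest where ii: "ii = x # y # rest" using assms by (cases ii; cases "tl ii") auto
  have "y > 0" using posi ii by auto
  show "block_start ii 1 = ii!0" using ii by (simp add: block_start_def)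
  show "s0 (ii!0) = 1" unfolding s0_def using ii \<open>y>0\<close>
    by (intro block_of_eqI) (auto simp: block_start_def)
  show "ii!0 < N" using ii \<open>y>0\<close> by simp
qed

lemma d_facts: assumes "1 < r"
  shows "u (N - hd jj) = r - 1" "block_start (rev jj) (r - 1) = N - hd jj" "N - hd jj < N"
proof -
  obtain x rest where jj: "jj = x # rest" using assms len by (cases jj) auto
  have "x > 0" using posj jj by auto
  have lr: "length rest = r - 1" using len jj by simp
  have bs: "block_start (rev jj) (r - 1) = N - hd jj"
    using jj lr sums by (simp add: block_start_def)
  show "block_start (rev jj) (r - 1) = N - hd jj" by (rule bs)
  have bs2: "block_start (rev jj) (Suc (r - 1)) = N"
    using jj lr sums assms by (simp add: block_start_def)
  show "N - hd jj < N" using jj \<open>x>0\<close> sums by simp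
  show "u (N - hd jj) = r - 1" unfolding u_def
    by (rule block_of_eqI) (use bs bs2 jj \<open>x>0\<close> sums in auto)
qed

lemma E_cd: assumes "1 < r" shows "E (ii!0) (N - hd jj)"
  using c_facts[OF assms] d_facts[OF assms] assms unfolding E_def V_def t0_def by simp

lemma all_V_r1: "r = 1 \<Longrightarrow> p < N \<Longrightarrow> V p q"
  using s0_lt[of p] unfolding V_def by simp


definition "valid p \<longleftrightarrow> (\<forall>i<N. V i (p i) \<or> E i (p i))"
definition "P = {p. p permutes {0..<N} \<and> valid p}"
definition "Vs p = {i\<in>{0..<N}. V i (p i)}"
definition "mnm p = (\<Sum>i\<in>Vs p. Poly_Mapping.single (i, p i) (1::nat))"

lemma finite_P: "finite P"
  unfolding P_def by (rule finite_subset[OF _ finite_permutations[of "{0..<N}"]]) auto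

lemma P_perm: "p \<in> P \<Longrightarrow> p permutes {0..<N}" unfolding P_def by auto
lemma P_valid: "p \<in> P \<Longrightarrow> i < N \<Longrightarrow> V i (p i) \<or> E i (p i)" unfolding P_def valid_def by auto
lemma P_lt: "p \<in> P \<Longrightarrow> i < N \<Longrightarrow> p i < N" unfolding P_def using permutes_in_image by fastforce

lemma mon_deg_mnm: "mon_deg (mnm p) = card (Vs p)"
  unfolding mnm_def mon_deg_sum by (simp add: mon_deg_single1)

lemma T_valid:
  assumes "valid p"
  shows "(\<Prod>i=0..<N. M_entry ii jj i (p i) :: 'a::comm_ring_1 mpoly) = Poly_Mapping.single (mnm p) 1"
proof -
  have "(\<Prod>i=0..<N. M_entry ii jj i (p i) :: 'a mpoly) =
        (\<Prod>i=0..<N. Poly_Mapping.single (if V i (p i) then Poly_Mapping.single (i, p i) 1 else 0) 1)"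
    using assms unfolding valid_def by (intro prod.cong) (auto simp: entry Xvar_single)
  also have "\<dots> = Poly_Mapping.single (\<Sum>i=0..<N. (if V i (p i) then Poly_Mapping.single (i, p i) 1 else 0)) 1"
    by (rule prod_singles) simp
  also have "(\<Sum>i=0..<N. (if V i (p i) then Poly_Mapping.single (i, p i) 1 else 0)) = mnm p"
    unfolding mnm_def Vs_def by (rule sum.inter_filter[symmetric]) simp
  finally show ?thesis .
qed

lemma T_invalid:
  assumes "\<not> valid p"
  shows "(\<Prod>i=0..<N. M_entry ii jj i (p i) :: 'a::comm_ring_1 mpoly) = 0"
proof -
  obtain i where i: "i < N" "\<not> V i (p i)" "\<not> E i (p i)" using assms unfolding valid_def by auto
  show ?thesis by (rule prod_zero) (use i in \<open>auto simp: entry intro!: bexI[of _ i]\<close>)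
qed

lemma det_P:
  "det (Mmat ii jj :: 'a::comm_ring_1 mpoly mat) = (\<Sum>p\<in>P. signof p * (\<Prod>i=0..<N. M_entry ii jj i (p i)))"
proof -
  have "det (Mmat ii jj :: 'a mpoly mat) = (\<Sum>p\<in>{p. p permutes {0..<N}}. signof p * (\<Prod>i=0..<N. M_entry ii jj i (p i)))"
    unfolding det_def Mmat_def using sums
    by (auto intro!: sum.cong prod.cong simp: permutes_in_image)
  also have "\<dots> = (\<Sum>p\<in>P. signof p * (\<Prod>i=0..<N. M_entry ii jj i (p i)))"
    by (rule sum.mono_neutral_right) (auto simp: P_def T_invalid finite_permutations)
  finally show ?thesis .
qed

lemma det_expand:
  "det (Mmat ii jj :: 'a::comm_ring_1 mpoly mat) = (\<Sum>p\<in>P. Poly_Mapping.single (mnm p) (of_int (sign p)))"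
proof -
  have "det (Mmat ii jj :: 'a mpoly mat) = (\<Sum>p\<in>{p. p permutes {0..<N}}. signof p * (\<Prod>i=0..<N. M_entry ii jj i (p i)))"
    unfolding det_def Mmat_def using sums
    by (auto intro!: sum.cong prod.cong simp: permutes_in_image)
  also have "\<dots> = (\<Sum>p\<in>P. signof p * (\<Prod>i=0..<N. M_entry ii jj i (p i)))"
    by (rule sum.mono_neutral_right) (auto simp: P_def T_invalid finite_permutations)
  also have "\<dots> = (\<Sum>p\<in>P. Poly_Mapping.single (mnm p) (of_int (sign p)))"
    by (intro sum.cong) (auto simp: P_def T_valid mult_single simp flip: single_of_int)
  finally show ?thesis .
qed

lemma lookup_mnm: "Poly_Mapping.lookup (mnm p) (i, j) = (if i < N \<and> V i (p i) \<and> j = p i then 1 else 0)"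
proof -
  have "Poly_Mapping.lookup (mnm p) (i, j) = (\<Sum>k\<in>Vs p. if k = i \<and> p k = j then 1 else 0)"
    unfolding mnm_def lookup_sum by (intro sum.cong) (auto simp: lookup_single)
  also have "\<dots> = (\<Sum>k\<in>Vs p. if k = i then (if p i = j then 1 else 0) else 0)"
    by (intro sum.cong) auto
  also have "\<dots> = (if i < N \<and> V i (p i) \<and> j = p i then 1 else 0)"
    by (subst sum.delta) (auto simp: Vs_def)
  finally show ?thesis .
qed

lemma mnm_inj:
  assumes "p \<in> P" "q \<in> P" "mnm p = mnm q" shows "p = q"
proof
  fix i
  show "p i = q i"
  proof (cases "i < N")
    case False then show ?thesis using assms(1,2) unfolding P_def permutes_def by auto
  next
    case True
    have pq: "p i < N" "q i < N" using True assms(1,2) unfolding P_def by (auto simp: permutes_in_image)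
    show ?thesis
    proof (cases "V i (p i)")
      case True
      have "Poly_Mapping.lookup (mnm q) (i, p i) = 1"
        using lookup_mnm[of p i "p i"] assms(3) True \<open>i<N\<close> by simp
      show ?thesis
      proof (rule ccontr)
        assume "p i \<noteq> q i"
        then have "Poly_Mapping.lookup (mnm q) (i, p i) = 0" unfolding lookup_mnm by simp
        with \<open>Poly_Mapping.lookup (mnm q) (i, p i) = 1\<close> show False by simp
      qed
    next
      case False
      then have "E i (p i)" using P_valid[OF assms(1) \<open>i<N\<close>] by auto
      moreover have "\<not> V i (q i)"
      proof
        assume "V i (q i)"
        then have "Poly_Mapping.lookup (mnm p) (i, q i) = 1"
          using lookup_mnm[of q i "q i"] assms(3) \<open>i<N\<close> by simp
        moreover have "Poly_Mapping.lookup (mnm p) (i, q i) = 0"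
          unfolding lookup_mnm using False by auto
        ultimately show False by simp
      qed
      then have "E i (q i)" using P_valid[OF assms(2) \<open>i<N\<close>] by auto
      ultimately show ?thesis using row_unique pq by blast
    qed
  qed
qed

lemma lookup_det:
  "Poly_Mapping.lookup (det (Mmat ii jj :: 'a::comm_ring_1 mpoly mat)) m =
     (\<Sum>p\<in>P. if mnm p = m then of_int (sign p) else 0)"
  unfolding det_expand lookup_sum by (intro sum.cong) (auto simp: lookup_single)

lemma lookup_det_mnm:
  assumes "p \<in> P"
  shows "Poly_Mapping.lookup (det (Mmat ii jj :: 'a::comm_ring_1 mpoly mat)) (mnm p) = of_int (sign p)"
proof -
  have "(\<Sum>q\<in>P. if mnm q = mnm p then (of_int (sign q)::'a) else 0) = (\<Sum>q\<in>P. if q = p then of_int (sign q) else 0)"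
    by (intro sum.cong) (use mnm_inj assms in auto)
  also have "\<dots> = of_int (sign p)" using assms finite_P by simp
  finally show ?thesis by (simp add: lookup_det)
qed

lemma keys_det: "Poly_Mapping.keys (det (Mmat ii jj :: 'a::field mpoly mat)) = mnm ` P"
proof (intro equalityI subsetI)
  fix m assume m: "m \<in> Poly_Mapping.keys (det (Mmat ii jj :: 'a mpoly mat))"
  show "m \<in> mnm ` P"
  proof (rule ccontr)
    assume "m \<notin> mnm ` P"
    then have "Poly_Mapping.lookup (det (Mmat ii jj :: 'a mpoly mat)) m = 0"
      unfolding lookup_det by (intro sum.neutral) auto
    then show False using m by (simp add: in_keys_iff)
  qed
next
  fix m assume "m \<in> mnm ` P"
  then obtain p where "p \<in> P" "m = mnm p" by auto
  moreover have "of_int (sign p) \<noteq> (0::'a)" by (simp add: sign_def)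
  ultimately show "m \<in> Poly_Mapping.keys (det (Mmat ii jj :: 'a mpoly mat))"
    using lookup_det_mnm[of p, where 'a='a] \<open>p \<in> P\<close> by (simp add: in_keys_iff)
qed


lemma P_swap:
  assumes "p \<in> P" "a < N" "c < N" "V a (p c) \<or> E a (p c)" "V c (p a) \<or> E c (p a)"
  shows "p \<circ> Transposition.transpose a c \<in> P"
proof -
  have "p \<circ> Transposition.transpose a c permutes {0..<N}"
    by (rule permutes_compose[OF permutes_swap_id P_perm[OF assms(1)]]) (use assms in auto)
  moreover have "valid (p \<circ> Transposition.transpose a c)"
    unfolding valid_def using assms P_valid[OF assms(1)] by (auto simp: transpose_def)
  ultimately show ?thesis unfolding P_def by simp
qed

lemma caseA:
  assumes p0: "p0 \<in> P" and ab: "a < N" "b < N" "E a b" "p0 a \<noteq> b"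
  shows "\<exists>q1\<in>P. card (Vs q1) + 1 = card (Vs p0)"
proof -
  define a' where "a' = Hilbert_Choice.inv p0 b"
  have perm: "p0 permutes {0..<N}" using P_perm[OF p0] .
  have a'N: "a' < N" unfolding a'_def using perm ab(2) permutes_inv permutes_in_image by fastforce
  have pa': "p0 a' = b" unfolding a'_def using perm by (meson permutes_inverses(1))
  have aa': "a \<noteq> a'" using pa' ab(4) by auto
  have Vab': "V a (p0 a)"
  proof (rule ccontr)
    assume "\<not> V a (p0 a)"
    then have "E a (p0 a)" using P_valid[OF p0 ab(1)] by auto
    then show False using row_unique[OF P_lt[OF p0 ab(1)] ab(2) _ ab(3)] ab(4) by auto
  qed
  have Va'b: "V a' b"
  proof (rule ccontr)
    assume "\<not> V a' b"
    then have "E a' b" using P_valid[OF p0 a'N] pa' by auto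
    then show False using col_unique[OF a'N ab(1) _ ab(3)] aa' by auto
  qed
  have Va'b': "V a' (p0 a)" by (rule swapV[OF ab(3) Vab' Va'b])
  define q1 where "q1 = p0 \<circ> Transposition.transpose a a'"
  have q1P: "q1 \<in> P" unfolding q1_def
    by (rule P_swap[OF p0 ab(1) a'N]) (use pa' ab(3) Va'b' in auto)
  have "Vs q1 = Vs p0 - {a}"
    unfolding Vs_def q1_def using aa' pa' Va'b' Vab' Va'b VE_excl[OF ab(3)]
    by (auto simp: transpose_def)
  moreover have "a \<in> Vs p0" unfolding Vs_def using ab(1) Vab' by auto
  moreover have "finite (Vs p0)" unfolding Vs_def by auto
  ultimately have "card (Vs q1) + 1 = card (Vs p0)"
    by (metis Suc_eq_plus1 card_Suc_Diff1)
  with q1P show ?thesis by blast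
qed

definition "Es p = {i\<in>{0..<N}. E i (p i)}"
definition "Erows = {i\<in>{0..<N}. \<exists>j<N. E i j}"

lemma card_VE: "p \<in> P \<Longrightarrow> card (Vs p) + card (Es p) = N"
proof -
  assume p: "p \<in> P"
  have "Vs p \<union> Es p = {0..<N}"
  proof (intro equalityI subsetI)
    fix x assume "x \<in> {0..<N}"
    then show "x \<in> Vs p \<union> Es p" using P_valid[OF p, of x] unfolding Vs_def Es_def by simp
  qed (auto simp: Vs_def Es_def)
  moreover have "Vs p \<inter> Es p = {}" unfolding Vs_def Es_def using VE_excl by auto
  ultimately show ?thesis
    by (metis card_Un_disjoint card_atLeastLessThan diff_zero finite_Un finite_atLeastLessThan)
qed

lemma forcedB:
  assumes p0: "p0 \<in> P" and mx: "\<forall>p\<in>P. card (Vs p) \<le> card (Vs p0)"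
    and forced: "\<forall>a<N. \<forall>b<N. E a b \<longrightarrow> p0 a = b"
    and p: "p \<in> P" and ab: "a < N" "b < N" "E a b"
  shows "p a = b"
proof -
  have sub: "Es p \<subseteq> Erows" unfolding Es_def Erows_def using P_lt[OF p] by auto
  have eq0: "Es p0 = Erows" unfolding Es_def Erows_def using forced P_lt[OF p0] by auto
  have "card (Es p0) \<le> card (Es p)" using card_VE[OF p] card_VE[OF p0] mx p by fastforce
  moreover have "finite Erows" unfolding Erows_def by simp
  ultimately have "Es p = Erows" using sub eq0 card_seteq by metis
  then have "E a (p a)" using ab unfolding Es_def Erows_def by auto
  then show ?thesis using row_unique[OF P_lt[OF p ab(1)] ab(2) _ ab(3)] by auto
qed


definition "R1 = {i. i < N \<and> s0 i = 0}"
definition "C1 = {j. j < N \<and> t0 j = 0}"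
definition "Ecols = {j. \<exists>i<N. E i j}"

lemma B2:
  assumes r: "1 < r" and p0: "p0 \<in> P" and mx: "\<forall>p\<in>P. card (Vs p) \<le> card (Vs p0)"
    and forced: "\<forall>a<N. \<forall>b<N. E a b \<longrightarrow> p0 a = b"
    and p: "p \<in> P" and a: "a \<in> R1"
  shows "p a \<in> C1"
proof (rule ccontr)
  assume nC: "p a \<notin> C1"
  define c where "c = ii!0"
  define d where "d = N - hd jj"
  have cN: "c < N" and dN: "d < N" and Ecd: "E c d" and sc: "s0 c = 1" and ud: "u d = r - 1"
    using c_facts[OF r] d_facts[OF r] E_cd[OF r] unfolding c_def d_def by auto
  have td: "t0 d = 0" using ud unfolding t0_def by simp
  have aN: "a < N" and sa: "s0 a = 0" using a unfolding R1_def by auto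
  have pc: "p c = d" using forcedB[OF p0 mx forced p cN dN Ecd] .
  have tpa: "t0 (p a) \<noteq> 0" using nC P_lt[OF p aN] unfolding C1_def by auto
  have ac: "a \<noteq> c" using sa sc by auto
  have "p \<circ> Transposition.transpose a c \<in> P"
    by (rule P_swap[OF p aN cN]) (use pc sa sc tpa in \<open>auto simp: V_def\<close>)
  then have "(p \<circ> Transposition.transpose a c) c = d" using forcedB[OF p0 mx forced _ cN dN Ecd] by blast
  then have "p a = d" by (simp add: transpose_def)
  then show False using tpa td by simp
qed

lemma B3:
  assumes r: "1 < r" and p0: "p0 \<in> P" and mx: "\<forall>p\<in>P. card (Vs p) \<le> card (Vs p0)"
    and forced: "\<forall>a<N. \<forall>b<N. E a b \<longrightarrow> p0 a = b"
    and p: "p \<in> P"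
  shows "p ` R1 = C1 - Ecols"
proof (intro equalityI subsetI)
  fix j assume "j \<in> p ` R1"
  then obtain a where a: "a \<in> R1" "j = p a" by auto
  have aN: "a < N" and sa: "s0 a = 0" using a unfolding R1_def by auto
  have "j \<in> C1" using B2[OF r p0 mx forced p a(1)] a by simp
  moreover have "j \<notin> Ecols"
  proof
    assume "j \<in> Ecols"
    then obtain i where i: "i < N" "E i j" unfolding Ecols_def by auto
    have jN: "j < N" using P_lt[OF p aN] a by simp
    have "p i = j" using forcedB[OF p0 mx forced p i(1) jN i(2)] .
    then have "i = a" using a(2) permutes_inj[OF P_perm[OF p]] by (auto dest: injD)
    then show False using i(2) sa unfolding E_def by simp
  qed
  ultimately show "j \<in> C1 - Ecols" by simp
next
  fix j assume j: "j \<in> C1 - Ecols"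
  then have jN: "j < N" and tj: "t0 j = 0" unfolding C1_def by auto
  define i where "i = Hilbert_Choice.inv p j"
  have perm: "p permutes {0..<N}" using P_perm[OF p] .
  have iN: "i < N" unfolding i_def using perm jN permutes_inv permutes_in_image by fastforce
  have pi: "p i = j" unfolding i_def using perm by (meson permutes_inverses(1))
  have "s0 i = 0"
  proof (rule ccontr)
    assume "s0 i \<noteq> 0"
    then have "\<not> V i j" using tj unfolding V_def by simp
    then have "E i j" using P_valid[OF p iN] pi by auto
    then show False using j iN unfolding Ecols_def by auto
  qed
  then show "j \<in> p ` R1" using iN pi unfolding R1_def by force
qed


definition "mix a b = (\<lambda>i. if i \<in> R1 then a i else b i)"
definition "P1 p0 = {a\<in>P. \<forall>i. i \<notin> R1 \<longrightarrow> a i = p0 i}"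
definition "P2 p0 = {b\<in>P. \<forall>i\<in>R1. b i = p0 i}"

lemma R1_sub: "R1 \<subseteq> {0..<N}" unfolding R1_def by auto

lemma P_inj: "p \<in> P \<Longrightarrow> inj p" using permutes_inj[OF P_perm] by blast

lemma mix_P:
  assumes a: "a \<in> P" and b: "b \<in> P" and ab: "a ` R1 = b ` R1"
  shows "mix a b \<in> P"
proof -
  have inj: "inj_on (mix a b) {0..<N}"
  proof (rule inj_onI)
    fix x y assume x: "x \<in> {0..<N}" and y: "y \<in> {0..<N}" and e: "mix a b x = mix a b y"
    consider "x \<in> R1" "y \<in> R1" | "x \<notin> R1" "y \<notin> R1" | "x \<in> R1" "y \<notin> R1" | "x \<notin> R1" "y \<in> R1"
      by blast
    then show "x = y"
    proof cases
      case 1 then show ?thesis using e P_inj[OF a] unfolding mix_def by (auto dest: injD)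
    next
      case 2 then show ?thesis using e P_inj[OF b] unfolding mix_def by (auto dest: injD)
    next
      case 3
      then have "b y = a x" using e unfolding mix_def by simp
      then have "b y \<in> a ` R1" using 3 by auto
      then have "b y \<in> b ` R1" using ab by simp
      then obtain z where "z \<in> R1" "b y = b z" by auto
      then have "y = z" using P_inj[OF b] by (auto dest: injD)
      then show ?thesis using 3 \<open>z \<in> R1\<close> by simp
    next
      case 4
      then have "b x = a y" using e unfolding mix_def by simp
      then have "b x \<in> a ` R1" using 4 by auto
      then have "b x \<in> b ` R1" using ab by simp
      then obtain z where "z \<in> R1" "b x = b z" by auto
      then have "x = z" using P_inj[OF b] by (auto dest: injD)
      then show ?thesis using 4 \<open>z \<in> R1\<close> by simp
    qed
  qed
  have img: "mix a b ` {0..<N} \<subseteq> {0..<N}" unfolding mix_def using P_lt[OF a] P_lt[OF b] by auto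
  have "mix a b ` {0..<N} = {0..<N}" by (rule endo_inj_surj[OF _ img inj]) simp
  then have bij: "bij_betw (mix a b) {0..<N} {0..<N}" using inj by (simp add: bij_betw_def)
  have "mix a b permutes {0..<N}"
  proof (rule bij_imp_permutes[OF bij])
    fix x assume "x \<notin> {0..<N}"
    then show "mix a b x = x" using R1_sub permutes_not_in[OF P_perm[OF b]] unfolding mix_def by auto
  qed
  moreover have "valid (mix a b)" unfolding valid_def mix_def using P_valid[OF a] P_valid[OF b] by auto
  ultimately show ?thesis unfolding P_def by simp
qed

context
  fixes p0 assumes p0: "p0 \<in> P" and img: "\<forall>p\<in>P. p ` R1 = p0 ` R1"
begin

lemma mix_bij: "bij_betw (\<lambda>(a, b). mix a b) (P1 p0 \<times> P2 p0) P"
proof (rule bij_betw_byWitness[where f' = "\<lambda>p. (mix p p0, mix p0 p)"])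
  show "\<forall>x\<in>P1 p0 \<times> P2 p0. (\<lambda>p. (mix p p0, mix p0 p)) ((\<lambda>(a, b). mix a b) x) = x"
    unfolding P1_def P2_def mix_def by (auto intro!: ext)
  show "\<forall>p\<in>P. (\<lambda>(a, b). mix a b) (mix p p0, mix p0 p) = p"
    unfolding mix_def by (auto intro!: ext)
  show "(\<lambda>(a, b). mix a b) ` (P1 p0 \<times> P2 p0) \<subseteq> P"
    using mix_P img unfolding P1_def P2_def by auto
  show "(\<lambda>p. (mix p p0, mix p0 p)) ` P \<subseteq> P1 p0 \<times> P2 p0"
  proof
    fix x assume "x \<in> (\<lambda>p. (mix p p0, mix p0 p)) ` P"
    then obtain p where p: "p \<in> P" "x = (mix p p0, mix p0 p)" by auto
    have "mix p p0 \<in> P" "mix p0 p \<in> P" using mix_P[OF p(1) p0] mix_P[OF p0 p(1)] img p(1) by auto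
    then show "x \<in> P1 p0 \<times> P2 p0" using p(2) unfolding P1_def P2_def mix_def by auto
  qed
qed

lemma mix_comp:
  assumes a: "a \<in> P1 p0" and b: "b \<in> P2 p0"
  shows "mix a b = a \<circ> Hilbert_Choice.inv p0 \<circ> b"
proof
  fix i
  have perm0: "p0 permutes {0..<N}" using P_perm[OF p0] .
  have bP: "b \<in> P" using b unfolding P2_def by auto
  show "mix a b i = (a \<circ> Hilbert_Choice.inv p0 \<circ> b) i"
  proof (cases "i \<in> R1")
    case True
    then have "b i = p0 i" using b unfolding P2_def by auto
    then show ?thesis using True permutes_inverses(2)[OF perm0, of i] unfolding mix_def comp_def by simp
  next
    case False
    define k where "k = Hilbert_Choice.inv p0 (b i)"
    have pk: "p0 k = b i" unfolding k_def using permutes_inverses(1)[OF perm0] by simp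
    have "k \<notin> R1"
    proof
      assume "k \<in> R1"
      have bR: "b ` R1 = p0 ` R1" using img bP by blast
      have "b i \<in> p0 ` R1" using pk \<open>k \<in> R1\<close> by (metis image_eqI)
      then have "b i \<in> b ` R1" using bR by simp
      then obtain z where "z \<in> R1" "b i = b z" by auto
      then have "i = z" using P_inj[OF bP] by (auto dest: injD)
      then show False using False \<open>z \<in> R1\<close> by simp
    qed
    then have "a k = p0 k" using a unfolding P1_def by auto
    then show ?thesis using False pk unfolding mix_def k_def by simp
  qed
qed

lemma det_factor:
  "det (Mmat ii jj :: 'a::comm_ring_1 mpoly mat) =
     (signof p0 * (\<Sum>a\<in>P1 p0. signof a * (\<Prod>i\<in>R1. M_entry ii jj i (a i)))) *
     (\<Sum>b\<in>P2 p0. signof b * (\<Prod>i\<in>{0..<N} - R1. M_entry ii jj i (b i)))"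
proof -
  let ?T = "\<lambda>p. signof p * (\<Prod>i=0..<N. M_entry ii jj i (p i) :: 'a mpoly)"
  have "det (Mmat ii jj :: 'a mpoly mat) = (\<Sum>p\<in>P. ?T p)" by (rule det_P)
  also have "\<dots> = (\<Sum>x\<in>P1 p0 \<times> P2 p0. ?T ((\<lambda>(a, b). mix a b) x))"
    by (rule sum.reindex_bij_betw[OF mix_bij, symmetric])
  also have "\<dots> = (\<Sum>(a,b)\<in>P1 p0 \<times> P2 p0. (signof p0 * (signof a * (\<Prod>i\<in>R1. M_entry ii jj i (a i)))) *
        (signof b * (\<Prod>i\<in>{0..<N} - R1. M_entry ii jj i (b i))))"
  proof (rule sum.cong[OF refl])
    fix x assume "x \<in> P1 p0 \<times> P2 p0"
    then obtain a b where x: "x = (a, b)" and a: "a \<in> P1 p0" and b: "b \<in> P2 p0" by auto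
    have aP: "a \<in> P" and bP: "b \<in> P" using a b unfolding P1_def P2_def by auto
    have perm0: "p0 permutes {0..<N}" using P_perm[OF p0] .
    have s1: "(signof (a \<circ> (Hilbert_Choice.inv p0 \<circ> b)) :: 'a mpoly) = signof a * signof (Hilbert_Choice.inv p0 \<circ> b)"
      by (rule signof_compose[OF P_perm[OF aP] permutes_compose[OF P_perm[OF bP] permutes_inv[OF perm0]]])
    have s2: "(signof (Hilbert_Choice.inv p0 \<circ> b) :: 'a mpoly) = signof (Hilbert_Choice.inv p0) * signof b"
      by (rule signof_compose[OF permutes_inv[OF perm0] P_perm[OF bP]])
    have "signof (mix a b) = (signof a * signof (Hilbert_Choice.inv p0) * signof b :: 'a mpoly)"
      unfolding mix_comp[OF a b] comp_assoc s1 s2 by (simp only: mult.assoc)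
    also have "(signof (Hilbert_Choice.inv p0) :: 'a mpoly) = signof p0" by (rule signof_inv[OF _ perm0]) simp
    finally have sg: "signof (mix a b) = (signof a * signof p0 * signof b :: 'a mpoly)" .
    have "(\<Prod>i=0..<N. M_entry ii jj i (mix a b i) :: 'a mpoly) =
          (\<Prod>i\<in>{0..<N} - R1. M_entry ii jj i (mix a b i)) * (\<Prod>i\<in>R1. M_entry ii jj i (mix a b i))"
      by (rule prod.subset_diff[OF R1_sub]) simp
    also have "\<dots> = (\<Prod>i\<in>{0..<N} - R1. M_entry ii jj i (b i)) * (\<Prod>i\<in>R1. M_entry ii jj i (a i))"
      unfolding mix_def by (intro arg_cong2[where f="(*)"] prod.cong) auto
    finally have pr: "(\<Prod>i=0..<N. M_entry ii jj i (mix a b i) :: 'a mpoly) =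
          (\<Prod>i\<in>{0..<N} - R1. M_entry ii jj i (b i)) * (\<Prod>i\<in>R1. M_entry ii jj i (a i))" .
    have key: "?T (mix a b) = (signof p0 * (signof a * (\<Prod>i\<in>R1. M_entry ii jj i (a i)))) *
        (signof b * (\<Prod>i\<in>{0..<N} - R1. M_entry ii jj i (b i)))"
      unfolding sg pr by (simp only: mult_ac)
    show "?T ((\<lambda>(a, b). mix a b) x) = (case x of (a, b) \<Rightarrow> (signof p0 * (signof a * (\<Prod>i\<in>R1. M_entry ii jj i (a i)))) *
        (signof b * (\<Prod>i\<in>{0..<N} - R1. M_entry ii jj i (b i))))"
      using key unfolding x by simp
  qed
  also have "\<dots> = (signof p0 * (\<Sum>a\<in>P1 p0. signof a * (\<Prod>i\<in>R1. M_entry ii jj i (a i)))) *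
     (\<Sum>b\<in>P2 p0. signof b * (\<Prod>i\<in>{0..<N} - R1. M_entry ii jj i (b i)))"
    (is "_ = (?c * sum ?F ?A) * sum ?G ?B")
  proof -
    have "(\<Sum>(a,b)\<in>P1 p0 \<times> P2 p0. (signof p0 * (signof a * (\<Prod>i\<in>R1. M_entry ii jj i (a i)))) *
        (signof b * (\<Prod>i\<in>{0..<N} - R1. M_entry ii jj i (b i)))) = (\<Sum>a\<in>?A. ?c * ?F a) * sum ?G ?B"
      by (simp only: sum_product sum.cartesian_product)
    also have "\<dots> = (?c * sum ?F ?A) * sum ?G ?B" by (simp only: sum_distrib_left)
    finally show ?thesis .
  qed
  finally show ?thesis .
qed

end

end


theorem corollary6p6:
  fixes ii jj :: "nat list"
  assumes "length ii = length jj"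
    and "\<forall>k\<in>set ii. 0 < k" and "\<forall>k\<in>set jj. 0 < k"
    and "sum_list ii = sum_list jj"
    and "(det (Mmat ii jj) :: 'a::field mpoly) \<noteq> 0"
    and "irreducible (det (Mmat ii jj) :: 'a::field mpoly)"
  shows "(length ii = 1 \<longrightarrow> homogeneous (det (Mmat ii jj) :: 'a mpoly))
       \<and> (length ii > 1 \<longrightarrow>
            hom_component (total_deg (det (Mmat ii jj) :: 'a mpoly) - 1)
              (det (Mmat ii jj) :: 'a mpoly) \<noteq> 0)"
proof -
  interpret MM ii jj using assms(1-4) by unfold_locales
  define g where "g = (det (Mmat ii jj) :: 'a mpoly)"
  have keys: "Poly_Mapping.keys g = mnm ` P" unfolding g_def by (rule keys_det)
  have Pne: "P \<noteq> {}" using assms(5) keys unfolding g_def by (metis image_empty keys_eq_empty)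
  have fin: "finite ((\<lambda>p. card (Vs p)) ` P)" using finite_P by simp
  have ne: "(\<lambda>p. card (Vs p)) ` P \<noteq> {}" using Pne by simp
  have tdeg: "total_deg g = Max ((\<lambda>p. card (Vs p)) ` P)"
  proof -
    have "mon_deg ` Poly_Mapping.keys g = (\<lambda>p. card (Vs p)) ` P"
      unfolding keys image_image mon_deg_mnm ..
    then have "total_deg g = Max (insert 0 ((\<lambda>p. card (Vs p)) ` P))" unfolding total_deg_def by simp
    also have "\<dots> = max 0 (Max ((\<lambda>p. card (Vs p)) ` P))" using fin ne by (simp add: Max_insert)
    finally show ?thesis by simp
  qed
  have part1: "length ii = 1 \<longrightarrow> homogeneous g"
  proof
    assume r1: "length ii = 1"
    have VsN: "card (Vs p) = N" if "p \<in> P" for p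
    proof -
      have "Vs p = {0..<N}" unfolding Vs_def using all_V_r1[OF r1] by auto
      then show ?thesis by simp
    qed
    then have img: "(\<lambda>p. card (Vs p)) ` P = {N}" using Pne by auto
    show "homogeneous g" unfolding homogeneous_def tdeg img keys
      using VsN by (auto simp: mon_deg_mnm)
  qed
  have part2: "length ii > 1 \<longrightarrow> hom_component (total_deg g - 1) g \<noteq> 0"
  proof
    assume r: "length ii > 1"
    obtain p0 where p0: "p0 \<in> P" and p0max: "card (Vs p0) = Max ((\<lambda>p. card (Vs p)) ` P)"
      using Max_in[OF fin ne] by auto
    have mx: "\<forall>p\<in>P. card (Vs p) \<le> card (Vs p0)" using p0max fin by simp
    show "hom_component (total_deg g - 1) g \<noteq> 0"
    proof (cases "\<forall>a<N. \<forall>b<N. E a b \<longrightarrow> p0 a = b")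
      case False
      then obtain a b where ab: "a < N" "b < N" "E a b" "p0 a \<noteq> b" by auto
      obtain q1 where q1: "q1 \<in> P" "card (Vs q1) + 1 = card (Vs p0)" using caseA[OF p0 ab] by blast
      have md: "mon_deg (mnm q1) = total_deg g - 1" using q1(2) p0max tdeg mon_deg_mnm by simp
      have "Poly_Mapping.lookup (hom_component (total_deg g - 1) g) (mnm q1) = of_int (sign q1)"
        unfolding lookup_hom_component using md lookup_det_mnm[OF q1(1), where 'a='a] unfolding g_def by simp
      moreover have "(of_int (sign q1) :: 'a) \<noteq> 0" by (simp add: sign_def)
      ultimately show ?thesis by (metis lookup_zero)
    next
      case forced: True
      have img: "\<forall>p\<in>P. p ` R1 = p0 ` R1" using B3[OF r p0 mx forced] p0 by auto
      define A where "A = (\<Sum>a\<in>P1 p0. signof a * (\<Prod>i\<in>R1. M_entry ii jj i (a i)) :: 'a mpoly)"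
      define B where "B = (\<Sum>b\<in>P2 p0. signof b * (\<Prod>i\<in>{0..<N} - R1. M_entry ii jj i (b i)) :: 'a mpoly)"
      have gf: "g = (signof p0 * A) * B" unfolding g_def A_def B_def by (rule det_factor[OF p0 img])
      have r0: "0 < r" using r by auto
      have N0: "0 < N" using c_facts(3)[OF r] by simp
      have zR: "0 \<in> R1" unfolding R1_def using N0 s0_zero[OF r0] by simp
      have finR: "finite R1" using R1_sub finite_subset by blast
      have ctA: "Poly_Mapping.lookup A 0 = 0"
        unfolding A_def lookup_sum
      proof (rule sum.neutral, rule ballI)
        fix a assume "a \<in> P1 p0"
        have "V 0 (a 0)" unfolding V_def using s0_zero[OF r0] by simp
        then have "Poly_Mapping.lookup (M_entry ii jj 0 (a 0) :: 'a mpoly) 0 = 0" by (simp add: entry ct_Xvar)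
        then have "(\<Prod>i\<in>R1. Poly_Mapping.lookup (M_entry ii jj i (a i) :: 'a mpoly) 0) = 0"
          using zR finR by (intro prod_zero) auto
        then show "Poly_Mapping.lookup (signof a * (\<Prod>i\<in>R1. M_entry ii jj i (a i)) :: 'a mpoly) 0 = 0"
          by (simp add: ct_of_int_mult ct_prod)
      qed
      have t00: "t0 0 = r - 1" unfolding t0_def using u_zero[OF r0] by simp
      have ctB: "Poly_Mapping.lookup B 0 = 0"
        unfolding B_def lookup_sum
      proof (rule sum.neutral, rule ballI)
        fix b assume bP2: "b \<in> P2 p0"
        then have bP: "b \<in> P" unfolding P2_def by auto
        define k where "k = Hilbert_Choice.inv b 0"
        have perm: "b permutes {0..<N}" using P_perm[OF bP] .
        have kN: "k < N" unfolding k_def using perm N0 permutes_inv permutes_in_image by fastforce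
        have bk: "b k = 0" unfolding k_def using perm by (meson permutes_inverses(1))
        have kR: "k \<notin> R1"
        proof
          assume "k \<in> R1"
          then have "b k \<in> C1" using B3[OF r p0 mx forced bP] by auto
          then show False using bk t00 r unfolding C1_def by simp
        qed
        have "V k 0" unfolding V_def t00 using s0_lt[OF kN] by simp
        then have "Poly_Mapping.lookup (M_entry ii jj k (b k) :: 'a mpoly) 0 = 0" by (simp add: bk entry ct_Xvar)
        then have "(\<Prod>i\<in>{0..<N} - R1. Poly_Mapping.lookup (M_entry ii jj i (b i) :: 'a mpoly) 0) = 0"
          using kN kR by (intro prod_zero) auto
        then show "Poly_Mapping.lookup (signof b * (\<Prod>i\<in>{0..<N} - R1. M_entry ii jj i (b i)) :: 'a mpoly) 0 = 0"
          by (simp add: ct_of_int_mult ct_prod)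
      qed
      have "(signof p0 * A) dvd 1 \<or> B dvd 1" using irreducibleD[OF assms(6)[folded g_def] gf] .
      moreover have "Poly_Mapping.lookup (signof p0 * A) 0 = 0" by (simp add: ct_of_int_mult ctA)
      ultimately have False using ct_unit ctB by blast
      then show ?thesis ..
    qed
  qed
  show ?thesis using part1 part2 unfolding g_def by blast
qed

end
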